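(* Let $A$ be a store with sequence number $s_A$ performed by thread $i$, represented by a node of an acyclic modification order graph $G$. Then $U_i(CV_A) = U_i(\perp_{CV_A}) = s_A$ holds throughout each execution that terminates, where $U_i$ denotes the $i$-th component of a clock vector.
   Context: An execution is a sequence of events performed by threads. Each event $E$ has a thread id $t_E$ and a unique sequence number $s_E$ taken from a global counter that is incremented by one at every event, so sequence numbers strictly increase along the execution. A clock vector is a function from thread ids to natural numbers, with $(CV_1 \cup CV_2)(t) = \max(CV_1(t), CV_2(t))$ and $CV_1 \le CV_2$ iff $CV_1(t) \le CV_2(t)$ for all $t$; $U_i(CV) = CV(i)$. The modification order graph (mo-graph) has one node for each atomic store or atomic read-modify-write (RMW) executed so far; edges only connect nodes accessing the same memory location, and mo edges are added to it during the execution according to the C/C++ modification-order (coherence) constraints, so that the modification order it represents is consistent with the sequenced-before order of each thread. Each node $X$ stores a thread id $X.tid$, a set $X.edges$ of successor nodes (its outgoing mo edges), a field $X.rmw$ (a node or null), and a clock vector $X.cv$, also written $CV_X$. When the node for a store $A$ is created, its clock vector is $\perp_{CV_A} = \lambda t.\ (s_A \text{ if } t = t_A \text{ else } 0)$. Edges are added only by the following procedures. Merge(dst, src): if $src.cv \le dst.cv$ return false; otherwise set $dst.cv := dst.cv \cup src.cv$ and return true. AddEdge(from, to): let mustAdd be true iff ($from.rmw = to$ or $from.tid = to.tid$). If $from.cv \le to.cv$ and not mustAdd, return. While $from.rmw \ne$ null: let $next := from.rmw$; if $next = to$ stop the loop; otherwise $from := next$. Add $to$ to $from.edges$. If Merge(to,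 from) returns true, then let $Q := \{to\}$ and while $Q$ is nonempty remove a node $node$ from $Q$ and for each $dst \in node.edges$, if Merge(dst, node) returns true add $dst$ to $Q$. AddRMWEdge(from, rmw): set $from.rmw := rmw$; for each $dst \in from.edges$ with $dst \ne rmw$ add $dst$ to $rmw.edges$; set $from.edges := \emptyset$; call AddEdge(from, rmw). *)

theory Defs
  imports Main
begin

type_synonym cvec = "nat \<Rightarrow> nat"

definition cv_le :: "cvec \<Rightarrow> cvec \<Rightarrow> bool" where
  "cv_le a b \<longleftrightarrow> (\<forall>t. a t \<le> b t)"

definition cv_union :: "cvec \<Rightarrow> cvec \<Rightarrow> cvec" where
  "cv_union a b = (\<lambda>t. max (a t) (b t))"

text \<open>Initial clock vector of a store with thread id t and sequence number s.\<close>
definition bot_cv :: "nat \<Rightarrow> nat \<Rightarrow> cvec" where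
  "bot_cv t s = (\<lambda>u. if u = t then s else 0)"

record mo_state =
  ctr   :: nat                   \<comment> \<open>global event counter (last sequence number used)\<close>
  nds   :: "nat set"
  tid   :: "nat \<Rightarrow> nat"
  sq    :: "nat \<Rightarrow> nat"
  loc   :: "nat \<Rightarrow> nat"
  edges :: "nat \<Rightarrow> nat set"
  rmw   :: "nat \<Rightarrow> nat option"  \<comment> \<open>None = null\<close>
  cv    :: "nat \<Rightarrow> cvec"

definition merge :: "mo_state \<Rightarrow> nat \<Rightarrow> nat \<Rightarrow> bool \<times> mo_state" where
  "merge s dst src =
     (if cv_le (cv s src) (cv s dst) then (False, s)
      else (True, s\<lparr>cv := (cv s)(dst := cv_union (cv s dst) (cv s src))\<rparr>))"

text \<open>Inner for-loop of the propagation: iterate (in any order) over the set D of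
  remaining successors of node, with worklist Q.\<close>
inductive prop_inner :: "mo_state \<Rightarrow> nat \<Rightarrow> nat set \<Rightarrow> nat set \<Rightarrow> mo_state \<Rightarrow> nat set \<Rightarrow> bool" where
  pi_done: "prop_inner s node {} Q s Q"
| pi_step: "\<lbrakk> dst \<in> D; merge s dst node = (b, s1);
             prop_inner s1 node (D - {dst}) (if b then insert dst Q else Q) s' Q' \<rbrakk>
           \<Longrightarrow> prop_inner s node D Q s' Q'"

inductive propagate :: "mo_state \<Rightarrow> nat set \<Rightarrow> mo_state \<Rightarrow> bool" where
  pr_done: "propagate s {} s"
| pr_step: "\<lbrakk> node \<in> Q; prop_inner s node (edges s node) (Q - {node}) s1 Q1;
             propagate s1 Q1 s2 \<rbrakk> \<Longrightarrow> propagate s Q s2"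

text \<open>The loop following rmw pointers: rmw_chain s from to c means the loop, started
  at from, ends with from := c.\<close>
inductive rmw_chain :: "mo_state \<Rightarrow> nat \<Rightarrow> nat \<Rightarrow> nat \<Rightarrow> bool" where
  rc_null: "rmw s x = None \<Longrightarrow> rmw_chain s x to x"
| rc_hit:  "rmw s x = Some to \<Longrightarrow> rmw_chain s x to x"
| rc_next: "\<lbrakk> rmw s x = Some n; n \<noteq> to; rmw_chain s n to c \<rbrakk> \<Longrightarrow> rmw_chain s x to c"

definition must_add :: "mo_state \<Rightarrow> nat \<Rightarrow> nat \<Rightarrow> bool" where
  "must_add s from to \<longleftrightarrow> (rmw s from = Some to \<or> tid s from = tid s to)"

definition add_succ :: "mo_state \<Rightarrow> nat \<Rightarrow> nat \<Rightarrow> mo_state" where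
  "add_succ s c to = s\<lparr>edges := (edges s)(c := insert to (edges s c))\<rparr>"

text \<open>AddEdge(from, to) as a big-step relation (the propagation may be nondeterministic
  in the choice of worklist element and successor order).\<close>
inductive add_edge :: "mo_state \<Rightarrow> nat \<Rightarrow> nat \<Rightarrow> mo_state \<Rightarrow> bool" where
  ae_skip: "\<lbrakk> cv_le (cv s from) (cv s to); \<not> must_add s from to \<rbrakk> \<Longrightarrow> add_edge s from to s"
| ae_nomerge: "\<lbrakk> \<not> (cv_le (cv s from) (cv s to) \<and> \<not> must_add s from to);
                rmw_chain s from to c; merge (add_succ s c to) to c = (False, s2) \<rbrakk>
              \<Longrightarrow> add_edge s from to s2"
| ae_merge: "\<lbrakk> \<not> (cv_le (cv s from) (cv s to) \<and> \<not> must_add s from to);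
              rmw_chain s from to c; merge (add_succ s c to) to c = (True, s2);
              propagate s2 {to} s3 \<rbrakk>
            \<Longrightarrow> add_edge s from to s3"

definition rmw_prep :: "mo_state \<Rightarrow> nat \<Rightarrow> nat \<Rightarrow> mo_state" where
  "rmw_prep s from r =
    (let s1 = s\<lparr>rmw := (rmw s)(from := Some r)\<rparr>;
         s2 = s1\<lparr>edges := (edges s1)(r := edges s1 r \<union> (edges s1 from - {r}))\<rparr>
     in s2\<lparr>edges := (edges s2)(from := {})\<rparr>)"

inductive add_rmw_edge :: "mo_state \<Rightarrow> nat \<Rightarrow> nat \<Rightarrow> mo_state \<Rightarrow> bool" where
  "add_edge (rmw_prep s from r) from r s' \<Longrightarrow> add_rmw_edge s from r s'"

definition new_node :: "mo_state \<Rightarrow> nat \<Rightarrow> nat \<Rightarrow> nat \<Rightarrow> mo_state" where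
  "new_node s n t l =
    s\<lparr>ctr := Suc (ctr s), nds := insert n (nds s),
      tid := (tid s)(n := t), sq := (sq s)(n := Suc (ctr s)), loc := (loc s)(n := l),
      edges := (edges s)(n := {}), rmw := (rmw s)(n := None),
      cv := (cv s)(n := bot_cv t (Suc (ctr s)))\<rparr>"

text \<open>One step of an execution: an event creating no node (counter incremented), an
  event creating a node, or a call of AddEdge / AddRMWEdge between existing nodes
  accessing the same location.\<close>
inductive mo_step :: "mo_state \<Rightarrow> mo_state \<Rightarrow> bool" where
  st_event: "mo_step s (s\<lparr>ctr := Suc (ctr s)\<rparr>)"
| st_node: "n \<notin> nds s \<Longrightarrow> mo_step s (new_node s n t l)"
| st_edge: "\<lbrakk> a \<in> nds s; b \<in> nds s; loc s a = loc s b; add_edge s a b s' \<rbrakk> \<Longrightarrow> mo_step s s'"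
| st_rmw: "\<lbrakk> a \<in> nds s; b \<in> nds s; loc s a = loc s b; add_rmw_edge s a b s' \<rbrakk> \<Longrightarrow> mo_step s s'"

definition init_state :: "mo_state \<Rightarrow> bool" where
  "init_state s \<longleftrightarrow> ctr s = 0 \<and> nds s = {}"

definition mo_graph :: "mo_state \<Rightarrow> nat rel" where
  "mo_graph s = {(x, y). x \<in> nds s \<and> y \<in> edges s x}"

text \<open>The modification order represented by the graph (its transitive closure) is
  consistent with sequenced-before: same-thread same-location nodes are ordered by their
  sequence numbers.\<close>
definition sb_consistent :: "mo_state \<Rightarrow> bool" where
  "sb_consistent s \<longleftrightarrow>
     (\<forall>a\<in>nds s. \<forall>b\<in>nds s. tid s a = tid s b \<and> loc s a = loc s b \<and> sq s a < sq s b
        \<longrightarrow> (a, b) \<in> (mo_graph s)\<^sup>+)"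

end

theory Submission
  imports Defs
begin

definition Inv_st :: "mo_state \<Rightarrow> bool" where
  "Inv_st s \<longleftrightarrow> (\<forall>x\<in>nds s. edges s x \<subseteq> nds s \<and> (\<forall>y\<in>edges s x. loc s y = loc s x)
     \<and> (\<forall>r. rmw s x = Some r \<longrightarrow> r \<in> nds s \<and> loc s r = loc s x))"

definition Inv_cv :: "mo_state \<Rightarrow> bool" where
  "Inv_cv s \<longleftrightarrow> (\<forall>x\<in>nds s. sq s x \<le> cv s x (tid s x) \<and>
     (\<forall>t. cv s x t = 0 \<or> (\<exists>y\<in>nds s. (y,x) \<in> (mo_graph s)\<^sup>* \<and> tid s y = t \<and> cv s x t \<le> sq s y)))"

definition sbc :: "mo_state \<Rightarrow> mo_state \<Rightarrow> bool" where
  "sbc s s' \<longleftrightarrow> s' = s\<lparr>cv := cv s'\<rparr>"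

lemma sbc_refl: "sbc s s" by (simp add: sbc_def)

lemma sbc_I: "s' = s\<lparr>cv := c\<rparr> \<Longrightarrow> sbc s s'"
  unfolding sbc_def by simp

lemma sbc_D: "sbc s s' \<Longrightarrow> \<exists>c. s' = s\<lparr>cv := c\<rparr>"
  unfolding sbc_def by blast

lemma sbc_trans: "sbc s s1 \<Longrightarrow> sbc s1 s2 \<Longrightarrow> sbc s s2"
proof -
  assume "sbc s s1" "sbc s1 s2"
  then obtain c1 c2 where "s1 = s\<lparr>cv := c1\<rparr>" "s2 = s1\<lparr>cv := c2\<rparr>" using sbc_D by blast
  then have "s2 = s\<lparr>cv := c2\<rparr>" by simp
  then show ?thesis by (rule sbc_I)
qed

lemma sbc_fields: "sbc s s' \<Longrightarrow> nds s' = nds s \<and> edges s' = edges s \<and> tid s' = tid s \<and> sq s' = sq s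
   \<and> loc s' = loc s \<and> rmw s' = rmw s \<and> ctr s' = ctr s \<and> mo_graph s' = mo_graph s"
proof -
  assume "sbc s s'"
  then obtain c where "s' = s\<lparr>cv := c\<rparr>" using sbc_D by blast
  then show ?thesis by (simp add: mo_graph_def)
qed

lemma sbc_Inv_st: "sbc s s' \<Longrightarrow> Inv_st s' = Inv_st s"
proof -
  assume "sbc s s'"
  then obtain c where "s' = s\<lparr>cv := c\<rparr>" using sbc_D by blast
  then show ?thesis by (simp add: Inv_st_def)
qed

lemma merge_lem:
  assumes "Inv_cv s" "src \<in> nds s" "dst \<in> nds s" "dst \<in> edges s src" "merge s dst src = (b, s')"
  shows "Inv_cv s' \<and> sbc s s'"
proof (cases "cv_le (cv s src) (cv s dst)")
  case True
  then show ?thesis using assms by (simp add: merge_def sbc_refl)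
next
  case False
  then have s': "s' = s\<lparr>cv := (cv s)(dst := cv_union (cv s dst) (cv s src))\<rparr>"
    using assms(5) by (simp add: merge_def)
  have sb: "sbc s s'" using s' by (rule sbc_I)
  have mg: "mo_graph s' = mo_graph s" using s' by (simp add: mo_graph_def)
  have e: "(src, dst) \<in> mo_graph s" using assms(2,4) by (simp add: mo_graph_def)
  have "Inv_cv s'"
    unfolding Inv_cv_def
  proof
    fix x assume x: "x \<in> nds s'"
    show "sq s' x \<le> cv s' x (tid s' x) \<and>
     (\<forall>t. cv s' x t = 0 \<or> (\<exists>y\<in>nds s'. (y,x) \<in> (mo_graph s')\<^sup>* \<and> tid s' y = t \<and> cv s' x t \<le> sq s' y))"
    proof (cases "x = dst")
      case False
      then show ?thesis using x assms(1) s' mg by (simp add: Inv_cv_def)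
    next
      case True
      have a1: "sq s' x \<le> cv s' x (tid s' x)" using True x assms(1) s'
        by (fastforce simp: Inv_cv_def cv_union_def)
      have a2: "cv s' x t = 0 \<or> (\<exists>y\<in>nds s'. (y,x) \<in> (mo_graph s')\<^sup>* \<and> tid s' y = t \<and> cv s' x t \<le> sq s' y)" for t
      proof (cases "cv s src t \<le> cv s dst t")
        case True
        then show ?thesis using \<open>x = dst\<close> assms(1,3) s' mg by (simp add: Inv_cv_def cv_union_def max_def)
      next
        case False
        then have cvx: "cv s' x t = cv s src t" using \<open>x = dst\<close> s' by (simp add: cv_union_def)
        from assms(1,2) have "cv s src t = 0 \<or> (\<exists>y\<in>nds s. (y,src) \<in> (mo_graph s)\<^sup>* \<and> tid s y = t \<and> cv s src t \<le> sq s y)"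
          by (simp add: Inv_cv_def)
        then show ?thesis
        proof
          assume "cv s src t = 0" then show ?thesis using cvx by simp
        next
          assume "\<exists>y\<in>nds s. (y,src) \<in> (mo_graph s)\<^sup>* \<and> tid s y = t \<and> cv s src t \<le> sq s y"
          then obtain y where y: "y \<in> nds s" "(y,src) \<in> (mo_graph s)\<^sup>*" "tid s y = t" "cv s src t \<le> sq s y" by blast
          have "(y, dst) \<in> (mo_graph s)\<^sup>*" using y(2) e by (meson rtrancl.rtrancl_into_rtrancl)
          then show ?thesis using y cvx \<open>x = dst\<close> s' mg by auto
        qed
      qed
      show ?thesis using a1 a2 by blast
    qed
  qed
  then show ?thesis using sb by blast
qed

lemma prop_inner_lem:
  assumes "prop_inner s node D Q s' Q'"
  shows "Inv_cv s \<Longrightarrow> node \<in> nds s \<Longrightarrow> D \<subseteq> edges s node \<Longrightarrow> Q \<subseteq> nds s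
    \<Longrightarrow> edges s node \<subseteq> nds s \<Longrightarrow> Inv_cv s' \<and> Q' \<subseteq> nds s \<and> sbc s s'"
  using assms
proof (induction rule: prop_inner.induct)
  case (pi_done s node Q)
  then show ?case by (simp add: sbc_refl)
next
  case (pi_step dst D s node b s1 Q s' Q')
  have m: "Inv_cv s1 \<and> sbc s s1" using merge_lem[OF pi_step.prems(1,2) _ _ pi_step.hyps(2)] pi_step by blast
  have f: "nds s1 = nds s" "edges s1 = edges s" using sbc_fields m by auto
  have dn: "dst \<in> nds s" using pi_step.prems pi_step.hyps(1) by blast
  have "D - {dst} \<subseteq> edges s1 node" using f pi_step.prems by auto
  moreover have "(if b then insert dst Q else Q) \<subseteq> nds s1" using f pi_step.prems dn by auto
  ultimately have "Inv_cv s' \<and> Q' \<subseteq> nds s1 \<and> sbc s1 s'"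
    using pi_step.IH m f pi_step.prems by auto
  then show ?case using m f sbc_trans by auto
qed

lemma propagate_lem:
  assumes "propagate s Q s'"
  shows "Inv_cv s \<Longrightarrow> Q \<subseteq> nds s \<Longrightarrow> (\<forall>x\<in>nds s. edges s x \<subseteq> nds s) \<Longrightarrow> Inv_cv s' \<and> sbc s s'"
  using assms
proof (induction rule: propagate.induct)
  case (pr_done s)
  then show ?case by (simp add: sbc_refl)
next
  case (pr_step node Q s s1 Q1 s2)
  have a: "Inv_cv s1 \<and> Q1 \<subseteq> nds s \<and> sbc s s1"
    using prop_inner_lem[OF pr_step.hyps(2)] pr_step.prems pr_step.hyps(1) by auto
  have f: "nds s1 = nds s" "edges s1 = edges s" using sbc_fields a by auto
  have "Inv_cv s2 \<and> sbc s1 s2" using pr_step.IH a f pr_step.prems by auto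
  then show ?case using a sbc_trans by blast
qed

lemma tail_lem:
  assumes "Inv_st s1" "Inv_cv s1" "c \<in> nds s1" "b \<in> nds s1" "b \<in> edges s1 c"
    "merge s1 b c = (bb, s2)" "if bb then propagate s2 {b} s3 else s3 = s2"
  shows "Inv_st s3 \<and> Inv_cv s3 \<and> sbc s1 s3"
proof -
  have m: "Inv_cv s2 \<and> sbc s1 s2" using merge_lem assms by blast
  have f: "nds s2 = nds s1" "edges s2 = edges s1" using sbc_fields m by auto
  have en: "\<forall>x\<in>nds s1. edges s1 x \<subseteq> nds s1" using assms(1) by (simp add: Inv_st_def)
  have "Inv_cv s3 \<and> sbc s1 s3"
  proof (cases bb)
    case True
    then have "Inv_cv s3 \<and> sbc s2 s3" using propagate_lem[of s2 "{b}" s3] assms(7) m f en assms(4) by auto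
    then show ?thesis using m sbc_trans by blast
  next
    case False
    then show ?thesis using m assms(7) by simp
  qed
  then show ?thesis using sbc_Inv_st assms(1) by blast
qed

lemma rmw_chain_lem:
  assumes "rmw_chain s x to c"
  shows "Inv_st s \<Longrightarrow> x \<in> nds s \<Longrightarrow> c \<in> nds s \<and> loc s c = loc s x"
  using assms
  by (induction rule: rmw_chain.induct) (auto simp: Inv_st_def)

lemma Inv_cv_mono:
  assumes "Inv_cv s" "nds s' = nds s" "cv s' = cv s" "tid s' = tid s" "sq s' = sq s"
    "mo_graph s \<subseteq> (mo_graph s')\<^sup>*"
  shows "Inv_cv s'"
proof -
  have "(mo_graph s)\<^sup>* \<subseteq> (mo_graph s')\<^sup>*" using assms(6)
    by (metis rtrancl_idemp rtrancl_mono)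
  then show ?thesis using assms unfolding Inv_cv_def by (metis subsetD)
qed

definition persist :: "mo_state \<Rightarrow> mo_state \<Rightarrow> bool" where
  "persist s s' \<longleftrightarrow> nds s \<subseteq> nds s' \<and> (\<forall>x\<in>nds s. tid s' x = tid s x \<and> sq s' x = sq s x \<and> loc s' x = loc s x)
     \<and> mo_graph s \<subseteq> (mo_graph s')\<^sup>+"

lemma edge_case:
  assumes inv: "Inv_st s" "Inv_cv s" and a: "a \<in> nds s" and b: "b \<in> nds s" and l: "loc s a = loc s b"
    and ae: "add_edge s a b s'"
  shows "Inv_st s' \<and> Inv_cv s' \<and> persist s s'"
  using ae
proof cases
  case ae_skip
  then show ?thesis using inv by (simp add: persist_def) (auto simp: mo_graph_def)
next
  case (ae_nomerge c)
  let ?s1 = "add_succ s c b"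
  have c: "c \<in> nds s" "loc s c = loc s a" using rmw_chain_lem ae_nomerge inv a by auto
  have st1: "Inv_st ?s1" using inv c b l unfolding Inv_st_def add_succ_def by auto
  have sub: "mo_graph s \<subseteq> mo_graph ?s1" by (auto simp: mo_graph_def add_succ_def)
  have cv1: "Inv_cv ?s1" apply (rule Inv_cv_mono[OF inv(2)]) using sub by (auto simp: add_succ_def)
  have r: "Inv_st s' \<and> Inv_cv s' \<and> sbc ?s1 s'"
    using tail_lem[OF st1 cv1, of c b False s' s'] ae_nomerge c b by (auto simp: add_succ_def)
  have "sbc s ?s1 \<Longrightarrow> True" by simp
  have "persist s s'"
    using r sub sbc_fields[of ?s1 s'] unfolding persist_def by (auto simp: add_succ_def)
  then show ?thesis using r by blast
next
  case (ae_merge c s2)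
  let ?s1 = "add_succ s c b"
  have c: "c \<in> nds s" "loc s c = loc s a" using rmw_chain_lem ae_merge inv a by auto
  have st1: "Inv_st ?s1" using inv c b l unfolding Inv_st_def add_succ_def by auto
  have sub: "mo_graph s \<subseteq> mo_graph ?s1" by (auto simp: mo_graph_def add_succ_def)
  have cv1: "Inv_cv ?s1" apply (rule Inv_cv_mono[OF inv(2)]) using sub by (auto simp: add_succ_def)
  have r: "Inv_st s' \<and> Inv_cv s' \<and> sbc ?s1 s'"
    using tail_lem[OF st1 cv1, of c b True s2 s'] ae_merge c b by (auto simp: add_succ_def)
  have "persist s s'"
    using r sub sbc_fields[of ?s1 s'] unfolding persist_def by (auto simp: add_succ_def)
  then show ?thesis using r by blast
qed


lemma merge_sbc: "merge s d c = (b, s') \<Longrightarrow> sbc s s'"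
  unfolding merge_def by (auto split: if_splits intro: sbc_refl sbc_I)

lemma prop_inner_sbc: "prop_inner s node D Q s' Q' \<Longrightarrow> sbc s s'"
proof (induction rule: prop_inner.induct)
  case (pi_done s node Q) then show ?case by (rule sbc_refl)
next
  case (pi_step dst D s node b s1 Q s' Q')
  have "sbc s s1" using merge_sbc pi_step.hyps(2) by blast
  moreover have "edges s1 = edges s" using sbc_fields calculation by blast
  ultimately show ?case using pi_step.IH sbc_trans by blast
qed

lemma propagate_sbc: "propagate s Q s' \<Longrightarrow> sbc s s'"
proof (induction rule: propagate.induct)
  case (pr_done s) then show ?case by (rule sbc_refl)
next
  case (pr_step node Q s s1 Q1 s2)
  then show ?case using prop_inner_sbc sbc_trans by blast
qed

lemma trancl_sub: "r \<subseteq> s\<^sup>+ \<Longrightarrow> r\<^sup>+ \<subseteq> s\<^sup>+"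
proof
  fix p assume r: "r \<subseteq> s\<^sup>+" and p: "p \<in> r\<^sup>+"
  obtain x y where "p = (x, y)" by (cases p)
  with p have "(x, y) \<in> r\<^sup>+" by simp
  then have "(x, y) \<in> s\<^sup>+"
    by (induct rule: trancl_induct) (use r in \<open>auto intro: trancl_trans\<close>)
  then show "p \<in> s\<^sup>+" using \<open>p = (x, y)\<close> by simp
qed

lemma persist_refl: "persist s s"
  unfolding persist_def by auto

lemma persist_trans: "persist s1 s2 \<Longrightarrow> persist s2 s3 \<Longrightarrow> persist s1 s3"
  unfolding persist_def using trancl_sub by (smt (verit, best) subset_iff)

lemma rmw_case:
  assumes inv: "Inv_st s" "Inv_cv s" and a: "a \<in> nds s" and b: "b \<in> nds s" and l: "loc s a = loc s b"
    and ar: "add_rmw_edge s a b s'" and acy: "acyclic (mo_graph s')"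
  shows "Inv_st s' \<and> Inv_cv s' \<and> persist s s'"
proof -
  let ?p = "rmw_prep s a b"
  have ae: "add_edge ?p a b s'" using ar by (cases rule: add_rmw_edge.cases) auto
  have rp: "rmw ?p a = Some b" by (simp add: rmw_prep_def Let_def)
  have pf: "nds ?p = nds s" "cv ?p = cv s" "tid ?p = tid s" "sq ?p = sq s" "loc ?p = loc s"
    by (simp_all add: rmw_prep_def Let_def)
  have chain: "c = a" if "rmw_chain ?p a b c" for c
    using that rp by (cases rule: rmw_chain.cases) auto
  let ?s1 = "add_succ ?p a b"
  obtain bb s2 where mg: "merge ?s1 b a = (bb, s2)" and tl: "if bb then propagate s2 {b} s' else s' = s2"
    using ae
  proof cases
    case ae_skip then show ?thesis using rp by (simp add: must_add_def)
  next
    case (ae_nomerge c)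
    then show ?thesis using that[of False s'] chain by auto
  next
    case (ae_merge c s2)
    then show ?thesis using that[of True s2] chain by auto
  qed
  have sb: "sbc ?s1 s'"
  proof (cases bb)
    case True then show ?thesis using mg tl merge_sbc propagate_sbc sbc_trans by (metis)
  next
    case False then show ?thesis using mg tl merge_sbc by auto
  qed
  have "(a, b) \<in> mo_graph ?s1" using a pf by (simp add: mo_graph_def add_succ_def)
  then have "(a, b) \<in> mo_graph s'" using sbc_fields[OF sb] by simp
  then have ab: "a \<noteq> b" using acy unfolding acyclic_def by auto
  have e1: "edges ?s1 = ((edges s)(b := edges s b \<union> (edges s a - {b})))(a := {b})"
    using ab by (simp add: rmw_prep_def Let_def add_succ_def)
  have f1: "nds ?s1 = nds s" "cv ?s1 = cv s" "tid ?s1 = tid s" "sq ?s1 = sq s" "loc ?s1 = loc s"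
    "rmw ?s1 = (rmw s)(a := Some b)"
    by (simp_all add: rmw_prep_def Let_def add_succ_def)
  have st1: "Inv_st ?s1" using inv a b l unfolding Inv_st_def e1 f1 by auto
  have sub: "mo_graph s \<subseteq> (mo_graph ?s1)\<^sup>+"
  proof
    fix p assume "p \<in> mo_graph s"
    then obtain x y where p: "p = (x, y)" "x \<in> nds s" "y \<in> edges s x" by (auto simp: mo_graph_def)
    show "p \<in> (mo_graph ?s1)\<^sup>+"
    proof (cases "x = a")
      case True
      have ab1: "(a, b) \<in> mo_graph ?s1" using a by (simp add: mo_graph_def e1 f1)
      show ?thesis
      proof (cases "y = b")
        case True then show ?thesis using ab1 p \<open>x = a\<close> by auto
      next
        case False
        have "(b, y) \<in> mo_graph ?s1" using b p False True ab by (simp add: mo_graph_def e1 f1)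
        then show ?thesis using ab1 p \<open>x = a\<close> by auto
      qed
    next
      case False
      then have "(x, y) \<in> mo_graph ?s1" using p by (auto simp: mo_graph_def e1 f1)
      then show ?thesis using p by auto
    qed
  qed
  have cv1: "Inv_cv ?s1" apply (rule Inv_cv_mono[OF inv(2)]) using sub f1 trancl_into_rtrancl by auto
  have r: "Inv_st s' \<and> Inv_cv s' \<and> sbc ?s1 s'"
    using tail_lem[OF st1 cv1, of a b bb s2 s'] mg tl a b f1 e1 by auto
  have "persist s s'"
    using sub sbc_fields[OF sb] f1 unfolding persist_def by auto
  then show ?thesis using r by blast
qed

lemma node_case:
  assumes inv: "Inv_st s" "Inv_cv s" and n: "n \<notin> nds s"
  shows "Inv_st (new_node s n t l) \<and> Inv_cv (new_node s n t l) \<and> persist s (new_node s n t l)"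
proof -
  let ?s = "new_node s n t l"
  have mg: "mo_graph ?s = mo_graph s" using n by (auto simp: mo_graph_def new_node_def split: if_splits)
  have f: "nds ?s = insert n (nds s)" "edges ?s = (edges s)(n := {})" "rmw ?s = (rmw s)(n := None)"
    "tid ?s = (tid s)(n := t)" "sq ?s = (sq s)(n := Suc (ctr s))" "loc ?s = (loc s)(n := l)"
    "cv ?s = (cv s)(n := bot_cv t (Suc (ctr s)))"
    by (simp_all add: new_node_def)
  have st: "Inv_st ?s" using inv(1) n unfolding Inv_st_def f by auto
  have cvi: "Inv_cv ?s"
    unfolding Inv_cv_def
  proof
    fix x assume x: "x \<in> nds ?s"
    show "sq ?s x \<le> cv ?s x (tid ?s x) \<and>
     (\<forall>t'. cv ?s x t' = 0 \<or> (\<exists>y\<in>nds ?s. (y,x) \<in> (mo_graph ?s)\<^sup>* \<and> tid ?s y = t' \<and> cv ?s x t' \<le> sq ?s y))"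
    proof (cases "x = n")
      case True
      then show ?thesis using f by (auto simp: bot_cv_def)
    next
      case False
      then have xs: "x \<in> nds s" using x f by auto
      have "y \<in> nds s \<Longrightarrow> y \<noteq> n" for y using n by auto
      then show ?thesis using inv(2) xs False unfolding Inv_cv_def mg f
        by (smt (verit, best) fun_upd_other insert_iff)
    qed
  qed
  have "persist s ?s" using n mg unfolding persist_def f by auto
  then show ?thesis using st cvi by blast
qed

lemma step_lem:
  assumes "mo_step s s'" "Inv_st s" "Inv_cv s" "acyclic (mo_graph s')"
  shows "Inv_st s' \<and> Inv_cv s' \<and> persist s s'"
  using assms(1)
proof cases
  case st_event
  have "mo_graph s' = mo_graph s" using st_event by (simp add: mo_graph_def)
  then show ?thesis using st_event assms(2,3) unfolding Inv_st_def Inv_cv_def persist_def by auto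
next
  case (st_node n t l)
  then show ?thesis using node_case assms(2,3) by blast
next
  case (st_edge a b)
  then show ?thesis using edge_case assms(2,3) by blast
next
  case (st_rmw a b)
  then show ?thesis using rmw_case assms(2,3,4) by blast
qed

lemma path_loc:
  assumes "Inv_st s" "(y, x) \<in> (mo_graph s)\<^sup>+"
  shows "loc s y = loc s x \<and> y \<in> nds s \<and> x \<in> nds s"
  using assms(2)
proof (induct rule: trancl_induct)
  case (base z) then show ?case using assms(1) by (auto simp: mo_graph_def Inv_st_def)
next
  case (step z w) then show ?case using assms(1) by (auto simp: mo_graph_def Inv_st_def)
qed

theorem lemma2:
  fixes ex :: "nat \<Rightarrow> mo_state" and n :: nat
  assumes "init_state (ex 0)"
    and "\<And>k. k < n \<Longrightarrow> mo_step (ex k) (ex (Suc k))"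
    and "\<And>k. k \<le> n \<Longrightarrow> acyclic (mo_graph (ex k))"
    and "sb_consistent (ex n)"
  shows "\<forall>k\<le>n. \<forall>A\<in>nds (ex k).
           cv (ex k) A (tid (ex k) A) = bot_cv (tid (ex k) A) (sq (ex k) A) (tid (ex k) A)
         \<and> bot_cv (tid (ex k) A) (sq (ex k) A) (tid (ex k) A) = sq (ex k) A"
proof -
  have inv: "k \<le> n \<Longrightarrow> Inv_st (ex k) \<and> Inv_cv (ex k)" for k
  proof (induction k)
    case 0 then show ?case using assms(1) by (simp add: init_state_def Inv_st_def Inv_cv_def)
  next
    case (Suc k)
    then show ?case using step_lem[OF assms(2) _ _ assms(3)] by auto
  qed
  have pers: "k \<le> m \<Longrightarrow> m \<le> n \<Longrightarrow> persist (ex k) (ex m)" for k m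
  proof (induction m)
    case 0 then show ?case using persist_refl by simp
  next
    case (Suc m)
    show ?case
    proof (cases "k = Suc m")
      case True then show ?thesis using persist_refl by simp
    next
      case False
      then have "persist (ex k) (ex m)" using Suc by auto
      moreover have "persist (ex m) (ex (Suc m))"
        using step_lem[OF assms(2) _ _ assms(3)] inv Suc.prems by auto
      ultimately show ?thesis using persist_trans by blast
    qed
  qed
  show ?thesis
  proof (intro allI impI ballI)
    fix k A assume k: "k \<le> n" and A: "A \<in> nds (ex k)"
    let ?s = "ex k" and ?f = "ex n"
    have I: "Inv_st ?s" "Inv_cv ?s" using inv k by auto
    have P: "persist ?s ?f" using pers k by auto
    have lo: "sq ?s A \<le> cv ?s A (tid ?s A)" using I(2) A by (simp add: Inv_cv_def)
    have hi: "cv ?s A (tid ?s A) \<le> sq ?s A"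
    proof -
      have "cv ?s A (tid ?s A) = 0 \<or> (\<exists>y\<in>nds ?s. (y,A) \<in> (mo_graph ?s)\<^sup>* \<and> tid ?s y = tid ?s A \<and> cv ?s A (tid ?s A) \<le> sq ?s y)"
        using I(2) A by (simp add: Inv_cv_def)
      then show ?thesis
      proof
        assume "cv ?s A (tid ?s A) = 0" then show ?thesis by simp
      next
        assume "\<exists>y\<in>nds ?s. (y,A) \<in> (mo_graph ?s)\<^sup>* \<and> tid ?s y = tid ?s A \<and> cv ?s A (tid ?s A) \<le> sq ?s y"
        then obtain y where y: "y \<in> nds ?s" "(y,A) \<in> (mo_graph ?s)\<^sup>*" "tid ?s y = tid ?s A"
          "cv ?s A (tid ?s A) \<le> sq ?s y" by blast
        show ?thesis
        proof (cases "y = A")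
          case True then show ?thesis using y by simp
        next
          case False
          then have tr: "(y, A) \<in> (mo_graph ?s)\<^sup>+" using y(2) by (meson rtranclD)
          have ll: "loc ?s y = loc ?s A" using path_loc[OF I(1) tr] by simp
          have "sq ?s y \<le> sq ?s A"
          proof (rule ccontr)
            assume "\<not> sq ?s y \<le> sq ?s A"
            then have lt: "sq ?f A < sq ?f y" using P A y(1) unfolding persist_def by auto
            have inn: "A \<in> nds ?f" "y \<in> nds ?f" using P A y(1) unfolding persist_def by auto
            have "tid ?f A = tid ?f y" "loc ?f A = loc ?f y"
              using P A y(1) y(3) ll unfolding persist_def by auto
            then have "(A, y) \<in> (mo_graph ?f)\<^sup>+" using assms(4) inn lt
              unfolding sb_consistent_def by blast
            moreover have "(y, A) \<in> (mo_graph ?f)\<^sup>+"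
              using tr trancl_sub[of "mo_graph ?s" "mo_graph ?f"] P unfolding persist_def by auto
            ultimately have "(A, A) \<in> (mo_graph ?f)\<^sup>+" by (rule trancl_trans)
            then show False using assms(3)[of n] unfolding acyclic_def by auto
          qed
          then show ?thesis using y(4) by simp
        qed
      qed
    qed
    show "cv ?s A (tid ?s A) = bot_cv (tid ?s A) (sq ?s A) (tid ?s A)
         \<and> bot_cv (tid ?s A) (sq ?s A) (tid ?s A) = sq ?s A"
      using lo hi by (simp add: bot_cv_def)
  qed
qed

end
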